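(* Let $\mathcal{L}$ be a Lie algebra and let $(U,\rho)$ be a finite-dimensional representation of $\mathcal{L}$. Suppose $x,y_1,y_2,\ldots\in\mathcal{L}$ satisfy $[x,y_k]=\nu_ky_k$ with $\nu_k\in\mathbb{C}$ for $k=1,2,\ldots$. Then the set $\{\nu_k:\rho(y_k)\neq 0\}$ has at most $(\dim U)^2-\dim U+1$ distinct elements. *)

theory Defs
  imports Main "Jordan_Normal_Form.Matrix"
begin

definition lie_algebra ::
  "(complex \<Rightarrow> 'L::ab_group_add \<Rightarrow> 'L) \<Rightarrow> ('L \<Rightarrow> 'L \<Rightarrow> 'L) \<Rightarrow> bool" where
  "lie_algebra sc br \<longleftrightarrow>
     vector_space sc \<and>
     (\<forall>a b c. br (a + b) c = br a c + br b c) \<and>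
     (\<forall>a b c. br a (b + c) = br a b + br a c) \<and>
     (\<forall>t a b. br (sc t a) b = sc t (br a b)) \<and>
     (\<forall>t a b. br a (sc t b) = sc t (br a b)) \<and>
     (\<forall>a. br a a = 0) \<and>
     (\<forall>a b c. br a (br b c) + br b (br c a) + br c (br a b) = 0)"

text \<open>A finite-dimensional representation of dimension n, given (after a choice
  of basis of U = complex^n) as a Lie algebra homomorphism into gl_n(complex).\<close>
definition lie_rep ::
  "(complex \<Rightarrow> 'L::ab_group_add \<Rightarrow> 'L) \<Rightarrow> ('L \<Rightarrow> 'L \<Rightarrow> 'L) \<Rightarrow> nat \<Rightarrow> ('L \<Rightarrow> complex mat) \<Rightarrow> bool" where
  "lie_rep sc br n \<rho> \<longleftrightarrow>
     (\<forall>a. \<rho> a \<in> carrier_mat n n) \<and>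
     (\<forall>a b. \<rho> (a + b) = \<rho> a + \<rho> b) \<and>
     (\<forall>t a. \<rho> (sc t a) = smult_mat t (\<rho> a)) \<and>
     (\<forall>a b. \<rho> (br a b) = \<rho> a * \<rho> b - \<rho> b * \<rho> a)"

end

theory Submission
  imports Defs "Jordan_Normal_Form.Schur_Decomposition"
begin

lemma core:
  fixes B Z :: "complex mat"
  assumes B: "B \<in> carrier_mat n n" and Z: "Z \<in> carrier_mat n n"
    and ut: "upper_triangular B"
    and eq: "B * Z - Z * B = \<nu> \<cdot>\<^sub>m Z"
    and nz: "Z \<noteq> 0\<^sub>m n n"
  shows "\<exists>i<n. \<exists>j<n. \<nu> = B $$ (i,i) - B $$ (j,j)"
proof -
  obtain i1 j1 where ij1: "i1 < n" "j1 < n" "Z $$ (i1,j1) \<noteq> 0"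
  proof -
    have "\<exists>i<n. \<exists>j<n. Z $$ (i,j) \<noteq> 0"
    proof (rule ccontr)
      assume "\<not> ?thesis"
      hence "Z = 0\<^sub>m n n" using Z by (intro eq_matI) auto
      thus False using nz by simp
    qed
    thus ?thesis using that by blast
  qed
  define I where "I = {i. i < n \<and> (\<exists>j<n. Z $$ (i,j) \<noteq> 0)}"
  have fI: "finite I" "I \<noteq> {}" using ij1 unfolding I_def by auto
  define i0 where "i0 = Max I"
  have i0I: "i0 \<in> I" using fI unfolding i0_def by (rule Max_in)
  have i0max: "\<And>k j. k < n \<Longrightarrow> j < n \<Longrightarrow> i0 < k \<Longrightarrow> Z $$ (k,j) = 0"
  proof (rule ccontr)
    fix k j assume "k < n" "j < n" "i0 < k" "Z $$ (k,j) \<noteq> 0"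
    hence "k \<in> I" unfolding I_def by auto
    hence "k \<le> i0" using fI unfolding i0_def by simp
    thus False using \<open>i0 < k\<close> by simp
  qed
  define J where "J = {j. j < n \<and> Z $$ (i0,j) \<noteq> 0}"
  have fJ: "finite J" "J \<noteq> {}" using i0I unfolding J_def I_def by auto
  define j0 where "j0 = Min J"
  have j0J: "j0 \<in> J" using fJ unfolding j0_def by (rule Min_in)
  have j0min: "\<And>j. j < j0 \<Longrightarrow> Z $$ (i0,j) = 0"
  proof (rule ccontr)
    fix j assume "j < j0" "Z $$ (i0,j) \<noteq> 0"
    moreover have "j < n" using \<open>j < j0\<close> j0J unfolding J_def by auto
    ultimately have "j \<in> J" unfolding J_def by auto
    hence "j0 \<le> j" using fJ unfolding j0_def by simp
    thus False using \<open>j < j0\<close> by simp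
  qed
  have i0n: "i0 < n" using i0I unfolding I_def by auto
  have j0n: "j0 < n" and zne: "Z $$ (i0,j0) \<noteq> 0" using j0J unfolding J_def by auto
  have BZ: "(B * Z) $$ (i0,j0) = B $$ (i0,i0) * Z $$ (i0,j0)"
  proof -
    have "(B * Z) $$ (i0,j0) = (\<Sum>k\<in>{0..<n}. B $$ (i0,k) * Z $$ (k,j0))"
      using B Z i0n j0n by (simp add: scalar_prod_def)
    also have "\<dots> = (\<Sum>k\<in>{0..<n}. if k = i0 then B $$ (i0,i0) * Z $$ (i0,j0) else 0)"
    proof (rule sum.cong)
      fix k assume k: "k \<in> {0..<n}"
      show "B $$ (i0,k) * Z $$ (k,j0) = (if k = i0 then B $$ (i0,i0) * Z $$ (i0,j0) else 0)"
      proof (cases "k < i0")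
        case True
        then have "B $$ (i0,k) = 0" using ut B i0n by (intro upper_triangularD) auto
        then show ?thesis using True by simp
      next
        case False
        then show ?thesis using i0max[of k j0] k j0n by (cases "k = i0") auto
      qed
    qed simp
    also have "\<dots> = B $$ (i0,i0) * Z $$ (i0,j0)" using i0n by simp
    finally show ?thesis .
  qed
  have ZB: "(Z * B) $$ (i0,j0) = Z $$ (i0,j0) * B $$ (j0,j0)"
  proof -
    have "(Z * B) $$ (i0,j0) = (\<Sum>k\<in>{0..<n}. Z $$ (i0,k) * B $$ (k,j0))"
      using B Z i0n j0n by (simp add: scalar_prod_def)
    also have "\<dots> = (\<Sum>k\<in>{0..<n}. if k = j0 then Z $$ (i0,j0) * B $$ (j0,j0) else 0)"
    proof (rule sum.cong)
      fix k assume k: "k \<in> {0..<n}"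
      show "Z $$ (i0,k) * B $$ (k,j0) = (if k = j0 then Z $$ (i0,j0) * B $$ (j0,j0) else 0)"
      proof (cases "j0 < k")
        case True
        then have "B $$ (k,j0) = 0" using ut B k by (intro upper_triangularD) auto
        then show ?thesis using True by simp
      next
        case False
        then show ?thesis using j0min[of k] by (cases "k = j0") auto
      qed
    qed simp
    also have "\<dots> = Z $$ (i0,j0) * B $$ (j0,j0)" using j0n by simp
    finally show ?thesis .
  qed
  have "(B * Z - Z * B) $$ (i0,j0) = (\<nu> \<cdot>\<^sub>m Z) $$ (i0,j0)" using eq by simp
  hence "B $$ (i0,i0) * Z $$ (i0,j0) - Z $$ (i0,j0) * B $$ (j0,j0) = \<nu> * Z $$ (i0,j0)"
    using B Z i0n j0n BZ ZB by simp
  hence "(B $$ (i0,i0) - B $$ (j0,j0)) * Z $$ (i0,j0) = \<nu> * Z $$ (i0,j0)"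
    by (simp add: algebra_simps)
  hence "\<nu> = B $$ (i0,i0) - B $$ (j0,j0)" using zne by simp
  thus ?thesis using i0n j0n by blast
qed

lemma count_diffs:
  fixes d :: "nat \<Rightarrow> complex"
  assumes "S \<subseteq> (\<lambda>(i,j). d i - d j) ` ({0..<n} \<times> {0..<n})"
  shows "finite S \<and> card S \<le> n ^ 2 - n + 1"
proof -
  define f where "f = (\<lambda>(i,j). d i - d j)"
  define Off where "Off = ({0..<n} \<times> {0..<n}) - (\<lambda>i. (i,i)) ` {0..<n}"
  have Sins: "S \<subseteq> insert 0 (f ` Off)"
  proof
    fix v assume "v \<in> S"
    then obtain i j where ij: "i < n" "j < n" "v = d i - d j" using assms by auto
    show "v \<in> insert 0 (f ` Off)"
    proof (cases "i = j")
      case True thus ?thesis using ij by simp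
    next
      case False
      hence "(i,j) \<in> Off" using ij unfolding Off_def by auto
      thus ?thesis using ij unfolding f_def by force
    qed
  qed
  moreover have fO: "finite Off" unfolding Off_def by auto
  ultimately have fS: "finite S" by (meson finite_imageI finite_insert finite_subset)
  have "card Off = n * n - n" unfolding Off_def
    by (subst card_Diff_subset) (auto simp: card_image inj_on_def)
  have "card S \<le> card (insert 0 (f ` Off))"
    using Sins fO by (intro card_mono) auto
  also have "\<dots> \<le> card (f ` Off) + 1" by (simp add: card_insert_le_m1 card_insert_if)
  also have "\<dots> \<le> card Off + 1" using card_image_le[OF fO] by simp
  also have "\<dots> = n ^ 2 - n + 1" using \<open>card Off = _\<close> by (simp add: power2_eq_square)
  finally show ?thesis using fS by simp
qed

theorem lemma2:
  fixes sc :: "complex \<Rightarrow> 'L::ab_group_add \<Rightarrow> 'L"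
    and br :: "'L \<Rightarrow> 'L \<Rightarrow> 'L"
    and n :: nat
    and \<rho> :: "'L \<Rightarrow> complex mat"
    and x :: 'L and y :: "nat \<Rightarrow> 'L" and \<nu> :: "nat \<Rightarrow> complex"
  assumes "lie_algebra sc br"
    and "lie_rep sc br n \<rho>"
    and "\<And>k. br x (y k) = sc (\<nu> k) (y k)"
  shows "finite {\<nu> k | k. \<rho> (y k) \<noteq> 0\<^sub>m n n} \<and>
         card {\<nu> k | k. \<rho> (y k) \<noteq> 0\<^sub>m n n} \<le> n ^ 2 - n + 1"
proof -
  note R = assms(2)[unfolded lie_rep_def]
  have car: "\<And>a. \<rho> a \<in> carrier_mat n n" using R by blast
  define X where "X = \<rho> x"
  have X: "X \<in> carrier_mat n n" using car X_def by simp
  obtain es where es: "char_poly X = (\<Prod> a \<leftarrow> es. [:- a, 1:])"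
    using char_poly_factorized[OF X] by blast
  obtain B where B: "B \<in> carrier_mat n n" "upper_triangular B" "similar_mat X B"
    using schur_decomposition_exists[OF X es] by blast
  obtain P Q where PQ: "similar_mat_wit X B P Q" using B(3) unfolding similar_mat_def by blast
  have P: "P \<in> carrier_mat n n" and Q: "Q \<in> carrier_mat n n" and PQ1: "P * Q = 1\<^sub>m n"
    and QP1: "Q * P = 1\<^sub>m n" and XPBQ: "X = P * B * Q"
    using PQ X unfolding similar_mat_wit_def Let_def by auto
  have key: "\<exists>i<n. \<exists>j<n. \<nu> k = B $$ (i,i) - B $$ (j,j)" if nz: "\<rho> (y k) \<noteq> 0\<^sub>m n n" for k
  proof -
    define Y where "Y = \<rho> (y k)"
    have Y: "Y \<in> carrier_mat n n" using car Y_def by simp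
    have comm: "X * Y - Y * X = \<nu> k \<cdot>\<^sub>m Y"
      using R assms(3)[of k] unfolding X_def Y_def by metis
    define Z where "Z = Q * Y * P"
    have Z: "Z \<in> carrier_mat n n" using Q Y P Z_def by simp
    have BZ: "B * Z = Q * (X * Y) * P"
    proof -
      have "Q * (X * Y) * P = Q * (P * B * Q * Y) * P" using XPBQ by simp
      also have "\<dots> = (Q * P) * B * (Q * Y * P)"
        using P Q B Y by (simp add: assoc_mult_mat[of _ n n _ n _ n])
      also have "\<dots> = B * Z" using QP1 B Z_def by simp
      finally show ?thesis by simp
    qed
    have ZB: "Z * B = Q * (Y * X) * P"
    proof -
      have "Q * (Y * X) * P = Q * (Y * (P * B * Q)) * P" using XPBQ by simp
      also have "\<dots> = (Q * Y * P) * B * (Q * P)"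
        using P Q B Y by (simp add: assoc_mult_mat[of _ n n _ n _ n])
      also have "\<dots> = Z * B" using QP1 B Z Z_def by simp
      finally show ?thesis by simp
    qed
    have "Q * (X * Y - Y * X) * P = (Q * (X * Y) - Q * (Y * X)) * P"
      using X Y Q by (subst mult_minus_distrib_mat[of Q n n]) auto
    also have "\<dots> = Q * (X * Y) * P - Q * (Y * X) * P"
      using X Y Q P by (subst minus_mult_distrib_mat[of _ n n]) auto
    finally have "B * Z - Z * B = Q * (X * Y - Y * X) * P"
      using BZ ZB by simp
    also have "\<dots> = \<nu> k \<cdot>\<^sub>m Z" using comm Z_def Q Y P
      by (simp add: mult_smult_distrib[of _ n n] mult_smult_assoc_mat[of _ n n])
    finally have eqZ: "B * Z - Z * B = \<nu> k \<cdot>\<^sub>m Z" .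
    have "Z \<noteq> 0\<^sub>m n n"
    proof
      assume "Z = 0\<^sub>m n n"
      hence "P * Z * Q = 0\<^sub>m n n" using P Q by simp
      moreover have "P * Z * Q = Y"
      proof -
        have "P * Z * Q = (P * Q) * Y * (P * Q)"
          using P Q Y Z_def by (simp add: assoc_mult_mat[of _ n n _ n _ n])
        thus ?thesis using PQ1 Y by simp
      qed
      ultimately show False using nz Y_def by simp
    qed
    from core[OF B(1) Z B(2) eqZ this] show ?thesis .
  qed
  have "{\<nu> k | k. \<rho> (y k) \<noteq> 0\<^sub>m n n} \<subseteq> (\<lambda>(i,j). B $$ (i,i) - B $$ (j,j)) ` ({0..<n} \<times> {0..<n})"
    using key by fastforce
  from count_diffs[OF this] show ?thesis .
qed

end
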